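(* Let $v_1,\dots,v_n\in\mathbb{R}^k$ span $\mathbb{R}^k$ and satisfy the $1/2$-sandwich condition. Then there is a centered ellipsoid passing through $v_1,\dots,v_n$, i.e. there is a symmetric positive semidefinite $k\times k$ matrix $M$ with $v_i^TMv_i=1$ for all $i$.
   Context: For $v_1,\dots,v_n\in\mathbb{R}^k$ with $S=\sum_{j=1}^n v_jv_j^T$ invertible and $0<\beta<1$, let $\mathcal{E}_\beta(v_1,\dots,v_n)=\{x\in\mathbb{R}^k: x^TS^{-1}x\le\beta\}$ and $\mathcal{E}_1(v_1,\dots,v_n)=\{x: x^TS^{-1}x\le 1\}$. The points satisfy the $\beta$-sandwich condition if $\{v_1,\dots,v_n\}\subseteq\mathcal{E}_1(v_1,\dots,v_n)\setminus\mathcal{E}_\beta(v_1,\dots,v_n)$. A centered ellipsoid is described by a positive semidefinite matrix $M$ and passes through $v$ if $v^TMv=1$. *)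

theory Defs
  imports "HOL-Analysis.Analysis"
begin

text \<open>Points v_1..v_n are represented as v 0, ..., v (n-1).
  scatter n v is S = sum_j v_j v_j^T.\<close>

definition scatter :: "nat \<Rightarrow> (nat \<Rightarrow> real^'k) \<Rightarrow> real^'k^'k" where
  "scatter n v = (\<Sum>j<n. (\<chi> a b. (v j)$a * (v j)$b))"

definition ellipsoid_E :: "real \<Rightarrow> nat \<Rightarrow> (nat \<Rightarrow> real^'k) \<Rightarrow> (real^'k) set" where
  "ellipsoid_E \<beta> n v = {x. x \<bullet> (matrix_inv (scatter n v) *v x) \<le> \<beta>}"

definition beta_sandwich :: "real \<Rightarrow> nat \<Rightarrow> (nat \<Rightarrow> real^'k) \<Rightarrow> bool" where
  "beta_sandwich \<beta> n v \<longleftrightarrow>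
     (\<forall>i<n. v i \<in> ellipsoid_E 1 n v - ellipsoid_E \<beta> n v)"

end

theory Submission
  imports Defs "Jordan_Normal_Form.Determinant"
begin

lemma solve_inj:
  fixes G :: "nat \<Rightarrow> nat \<Rightarrow> real"
  assumes inj: "\<And>x. (\<forall>i<n. (\<Sum>j<n. G i j * x j) = 0) \<Longrightarrow> \<forall>j<n. x j = 0"
  shows "\<exists>d. \<forall>i<n. (\<Sum>j<n. G i j * d j) = 1"
proof -
  define A where "A = Matrix.mat n n (\<lambda>(i,j). G i j)"
  have A: "A \<in> carrier_mat n n" unfolding A_def by simp
  have mv: "vec_index (A *\<^sub>v w) i = (\<Sum>j<n. G i j * vec_index w j)" if "w \<in> carrier_vec n" "i < n" for w i
    using that unfolding A_def scalar_prod_def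
    by (auto simp: lessThan_atLeast0 scalar_prod_def intro!: sum.cong)
  have "det A \<noteq> 0"
  proof
    assume "det A = 0"
    then obtain w where w: "w \<in> carrier_vec n" "w \<noteq> 0\<^sub>v n" "A *\<^sub>v w = 0\<^sub>v n"
      using det_0_iff_vec_prod_zero[OF A] by auto
    have "\<forall>i<n. (\<Sum>j<n. G i j * vec_index w j) = 0"
      using mv[OF w(1)] w(3) by (metis index_zero_vec(1))
    from inj[OF this] have "w = 0\<^sub>v n" using w(1) by (intro eq_vecI) auto
    with w(2) show False by simp
  qed
  from det_non_zero_imp_unit[OF A this, of "()"]
  obtain B where B: "B \<in> carrier_mat n n" "A * B = 1\<^sub>m n"
    unfolding Units_def ring_mat_def by auto
  define e where "e = Matrix.vec n (\<lambda>_. 1::real)"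
  define u where "u = B *\<^sub>v e"
  have e: "e \<in> carrier_vec n" unfolding e_def by simp
  have u: "u \<in> carrier_vec n" unfolding u_def using B e by simp
  have "A *\<^sub>v u = e" unfolding u_def using A B e
    by (metis assoc_mult_mat_vec one_mult_mat_vec)
  then have "\<forall>i<n. (\<Sum>j<n. G i j * vec_index u j) = 1"
    using mv[OF u] unfolding e_def by (metis index_vec)
  then show ?thesis by blast
qed

lemma argmax_ex:
  fixes f :: "nat \<Rightarrow> real"
  assumes "n > 0"
  shows "\<exists>m<n. \<forall>j<n. f j \<le> f m"
proof -
  have "Max (f ` {..<n}) \<in> f ` {..<n}" using assms by (intro Max_in) auto
  then obtain m where m: "m < n" "f m = Max (f ` {..<n})" by auto
  then show ?thesis by (metis Max_ge finite_imageI finite_lessThan imageI lessThan_iff)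
qed

lemma arith_contra:
  fixes x y a D :: real
  assumes "1/2 < x" "x \<le> 1" "1/2 < y" "y \<le> 1" "a < 0"
    and r1: "y^2 * D \<le> 1 - (y - y^2) * a"
    and r2: "1 \<le> x^2 * a + (x - x^2) * D"
  shows False
proof -
  have p: "0 \<le> x - x^2" using assms by (simp add: power2_eq_square mult_left_le_one_le)
  have "(x - x^2) * (y^2 * D) \<le> (x - x^2) * (1 - (y - y^2) * a)" using mult_left_mono[OF r1 p] .
  moreover have "y^2 * 1 \<le> y^2 * (x^2 * a + (x - x^2) * D)" using mult_left_mono[OF r2, of "y^2"] by simp
  ultimately have "y^2 - (x - x^2) \<le> a * (x * y * (x + y - 1))"
    by (simp add: algebra_simps power2_eq_square)
  moreover have "y^2 - (x - x^2) > 0"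
  proof -
    have eq: "x - x^2 = 1/4 - (x - 1/2)^2" by (simp add: power2_eq_square algebra_simps)
    have "x - x^2 \<le> 1/4" unfolding eq by simp
    moreover have "y^2 > 1/4"
    proof -
      have "(1/2::real) * (1/2) < y * y" using assms(3) by (intro mult_strict_mono) auto
      then show ?thesis by (simp add: power2_eq_square)
    qed
    ultimately show ?thesis by simp
  qed
  moreover have "a * (x * y * (x + y - 1)) \<le> 0"
    using assms by (intro mult_nonpos_nonneg) auto
  ultimately show False by simp
qed

lemma dd_solve:
  fixes G :: "nat \<Rightarrow> nat \<Rightarrow> real" and t :: "nat \<Rightarrow> real"
  assumes nn: "\<And>i j. i<n \<Longrightarrow> j<n \<Longrightarrow> 0 \<le> G i j"
   and diag: "\<And>i. i<n \<Longrightarrow> G i i = (t i)^2"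
   and rs: "\<And>i. i<n \<Longrightarrow> (\<Sum>j<n. G i j) = t i"
   and half: "\<And>i. i<n \<Longrightarrow> t i > 1/2"
  shows "\<exists>d. (\<forall>j<n. 0 \<le> d j) \<and> (\<forall>i<n. (\<Sum>j<n. G i j * d j) = 1)"
proof -
  have off: "(\<Sum>j\<in>{..<n}-{i}. G i j) = t i - (t i)^2" if "i<n" for i
    using sum.remove[of "{..<n}" i "G i"] that rs[OF that] diag[OF that] by simp
  have t1: "t i \<le> 1" if "i<n" for i
  proof -
    have "0 \<le> (\<Sum>j\<in>{..<n}-{i}. G i j)" using nn that by (intro sum_nonneg) auto
    then have "(t i)^2 \<le> t i" using off[OF that] by simp
    then have "t i * t i \<le> t i * 1" by (simp add: power2_eq_square)
    then show ?thesis using half[OF that] by (simp add: mult_le_cancel_left_pos)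
  qed
  have split: "(\<Sum>j<n. G i j * x j) = (t i)^2 * x i + (\<Sum>j\<in>{..<n}-{i}. G i j * x j)"
    if "i<n" for i x
    using sum.remove[of "{..<n}" i "\<lambda>j. G i j * x j"] that diag[OF that] by simp
  have upper: "(\<Sum>j\<in>{..<n}-{i}. G i j * x j) \<le> (t i - (t i)^2) * B"
    if "i<n" "\<And>j. j<n \<Longrightarrow> x j \<le> B" for i x B
  proof -
    have "(\<Sum>j\<in>{..<n}-{i}. G i j * x j) \<le> (\<Sum>j\<in>{..<n}-{i}. G i j * B)"
      using that nn by (intro sum_mono mult_left_mono) auto
    also have "\<dots> = (\<Sum>j\<in>{..<n}-{i}. G i j) * B" by (rule sum_distrib_right[symmetric])
    also have "\<dots> = (t i - (t i)^2) * B" using off[OF that(1)] by simp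
    finally show ?thesis .
  qed
  have lower: "(t i - (t i)^2) * B \<le> (\<Sum>j\<in>{..<n}-{i}. G i j * x j)"
    if "i<n" "\<And>j. j<n \<Longrightarrow> B \<le> x j" for i x B
  proof -
    have "(\<Sum>j\<in>{..<n}-{i}. G i j * B) \<le> (\<Sum>j\<in>{..<n}-{i}. G i j * x j)"
      using that nn by (intro sum_mono mult_left_mono) auto
    moreover have "(\<Sum>j\<in>{..<n}-{i}. G i j * B) = (t i - (t i)^2) * B"
      using off[OF that(1)] sum_distrib_right[of "G i" "{..<n}-{i}" B] by simp
    ultimately show ?thesis by simp
  qed
  have inj: "\<forall>j<n. x j = 0" if hx: "\<forall>i<n. (\<Sum>j<n. G i j * x j) = 0" for x
  proof (cases "n = 0")
    case True then show ?thesis by simp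
  next
    case False
    then obtain m where m: "m<n" "\<forall>j<n. \<bar>x j\<bar> \<le> \<bar>x m\<bar>" using argmax_ex[of n "\<lambda>j. \<bar>x j\<bar>"] by auto
    have "(t m)^2 * x m = - (\<Sum>j\<in>{..<n}-{m}. G m j * x j)" using split[OF m(1), of x] hx m(1) by simp
    hence "\<bar>(t m)^2 * x m\<bar> = \<bar>\<Sum>j\<in>{..<n}-{m}. G m j * x j\<bar>" by (simp only: abs_minus_cancel)
    hence "(t m)^2 * \<bar>x m\<bar> = \<bar>\<Sum>j\<in>{..<n}-{m}. G m j * x j\<bar>" by (simp add: abs_mult)
    also have "\<dots> \<le> (\<Sum>j\<in>{..<n}-{m}. \<bar>G m j * x j\<bar>)" by (rule sum_abs)
    also have "\<dots> = (\<Sum>j\<in>{..<n}-{m}. G m j * \<bar>x j\<bar>)" using nn m(1) by (intro sum.cong) (auto simp: abs_mult)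
    also have "\<dots> \<le> (t m - (t m)^2) * \<bar>x m\<bar>" using upper[OF m(1), of "\<lambda>j. \<bar>x j\<bar>"] m(2) by simp
    finally have "(2 * (t m)^2 - t m) * \<bar>x m\<bar> \<le> 0" by (simp add: algebra_simps)
    moreover have "2 * (t m)^2 - t m > 0" using half[OF m(1)]
      proof -
        have "0 < t m * (2 * t m - 1)" using half[OF m(1)] by (intro mult_pos_pos) auto
        then show ?thesis by (simp add: power2_eq_square algebra_simps)
      qed
    ultimately have "\<bar>x m\<bar> \<le> 0" by (simp add: mult_le_0_iff)
    then show ?thesis using m(2) by force
  qed
  obtain d where d: "\<forall>i<n. (\<Sum>j<n. G i j * d j) = 1" using solve_inj[of n G] inj by blast
  have "\<forall>j<n. 0 \<le> d j"
  proof (rule ccontr)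
    assume "\<not> ?thesis"
    then obtain j0 where j0: "j0 < n" "d j0 < 0" by auto
    then have n0: "n > 0" by simp
    obtain m where m: "m<n" "\<forall>j<n. - d j \<le> - d m" using argmax_ex[OF n0, of "\<lambda>j. - d j"] by auto
    obtain M where M: "M<n" "\<forall>j<n. d j \<le> d M" using argmax_ex[OF n0, of d] by auto
    have am: "d m < 0" using m j0 by force
    have rM: "(t M)^2 * d M \<le> 1 - (t M - (t M)^2) * d m"
      using split[OF M(1), of d] d M(1) lower[OF M(1), of "d m" d] m(2) by force
    have rm: "1 \<le> (t m)^2 * d m + (t m - (t m)^2) * d M"
      using split[OF m(1), of d] d m(1) upper[OF m(1), of d "d M"] M(2) by force
    show False using arith_contra[OF half[OF m(1)] t1[OF m(1)] half[OF M(1)] t1[OF M(1)] am rM rm] .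
  qed
  with d show ?thesis by blast
qed

lemma osum_mv:
  fixes w :: "nat \<Rightarrow> real^'k"
  shows "(\<Sum>j<n. (\<chi> a b. c j * ((w j)$a * (w j)$b))) *v x = (\<Sum>j<n. (c j * (w j \<bullet> x)) *\<^sub>R w j)"
proof -
  have "((\<Sum>j<n. (\<chi> a b. c j * ((w j)$a * (w j)$b))) *v x) $ a = (\<Sum>j<n. (c j * (w j \<bullet> x)) *\<^sub>R w j) $ a" for a
  proof -
    have "((\<Sum>j<n. (\<chi> a b. c j * ((w j)$a * (w j)$b))) *v x) $ a = (\<Sum>b\<in>UNIV. \<Sum>j<n. c j * ((w j)$a * (w j)$b) * x $ b)"
      by (simp add: matrix_vector_mult_def sum_distrib_right)
    also have "\<dots> = (\<Sum>j<n. \<Sum>b\<in>UNIV. c j * ((w j)$a * (w j)$b) * x $ b)" by (rule sum.swap)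
    also have "\<dots> = (\<Sum>j<n. (c j * (w j \<bullet> x)) *\<^sub>R w j) $ a"
      by (simp add: inner_vec_def sum_distrib_left sum_distrib_right algebra_simps)
    finally show ?thesis .
  qed
  then show ?thesis by (simp add: Finite_Cartesian_Product.vec_eq_iff)
qed

lemma scatter_mv:
  fixes v :: "nat \<Rightarrow> real^'k"
  shows "scatter n v *v x = (\<Sum>j<n. (v j \<bullet> x) *\<^sub>R v j)"
  using osum_mv[of "\<lambda>_. 1" v n x] by (simp add: scatter_def)

lemma osum_quad:
  fixes w :: "nat \<Rightarrow> real^'k"
  shows "x \<bullet> ((\<Sum>j<n. (\<chi> a b. c j * ((w j)$a * (w j)$b))) *v x) = (\<Sum>j<n. c j * (w j \<bullet> x)^2)"
  unfolding osum_mv by (simp add: inner_sum_right inner_commute power2_eq_square mult.assoc)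

lemma scatter_quad:
  fixes v :: "nat \<Rightarrow> real^'k"
  shows "x \<bullet> (scatter n v *v x) = (\<Sum>j<n. (v j \<bullet> x)^2)"
  unfolding scatter_mv by (simp add: inner_sum_right inner_commute power2_eq_square)

theorem corollary4p4:
  fixes v :: "nat \<Rightarrow> real^'k" and n :: nat
  assumes span: "span (v ` {..<n}) = UNIV"
    and sandwich: "beta_sandwich (1/2) n v"
  shows "\<exists>M :: real^'k^'k. transpose M = M
           \<and> (\<forall>x. 0 \<le> x \<bullet> (M *v x))
           \<and> (\<forall>i<n. v i \<bullet> (M *v v i) = 1)"
proof -
  define S where "S = scatter n v"
  define T where "T = matrix_inv S"
  have ker: "\<forall>x. S *v x = 0 \<longrightarrow> x = 0"
  proof (intro allI impI)
    fix x assume "S *v x = 0"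
    then have "(\<Sum>j<n. (v j \<bullet> x)^2) = 0" using scatter_quad[of x n v] unfolding S_def by simp
    then have z: "\<forall>j<n. v j \<bullet> x = 0" by (simp add: sum_nonneg_eq_0_iff)
    have o: "real_inner_class.orthogonal x y" if "y \<in> v ` {..<n}" for y
      using that z by (auto simp: real_inner_class.orthogonal_def inner_commute)
    have "real_inner_class.orthogonal x x"
      by (rule orthogonal_to_span[OF _ o]) (use span in auto)
    then have "x \<bullet> x = 0" by (simp add: real_inner_class.orthogonal_def)
    then show "x = 0" by simp
  qed
  have "invertible S" using ker matrix_left_invertible_ker invertible_left_inverse by blast
  then have ST: "S ** T = Finite_Cartesian_Product.mat 1 \<and> T ** S = Finite_Cartesian_Product.mat 1"
    unfolding T_def matrix_inv_def invertible_def by (rule someI_ex)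
  have St: "transpose S = S"
    unfolding S_def scatter_def by (simp add: Finite_Cartesian_Product.vec_eq_iff transpose_def mult.commute)
  have Tt: "transpose T = T"
  proof -
    have "transpose T ** S = Finite_Cartesian_Product.mat 1"
      using ST St by (metis matrix_transpose_mul transpose_mat)
    then have "transpose T ** S ** T = T" using ST by (metis matrix_mul_lid)
    then show ?thesis using ST by (metis matrix_mul_assoc matrix_mul_rid)
  qed
  have STv: "S *v (T *v y) = y" for y
    using ST by (metis matrix_vector_mul_assoc matrix_vector_mul_lid)
  have Tcomm: "x \<bullet> (T *v y) = (T *v x) \<bullet> y" for x y
    by (metis Tt dot_lmul_matrix vector_transpose_matrix)
  define t where "t i = v i \<bullet> (T *v v i)" for i
  define w where "w j = T *v v j" for j
  define G where "G i j = (v i \<bullet> w j)^2" for i j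
  have half: "t i > 1/2" and t1: "t i \<le> 1" if "i<n" for i
    using sandwich that unfolding beta_sandwich_def ellipsoid_E_def t_def T_def S_def by auto
  have rs: "(\<Sum>j<n. G i j) = t i" if "i<n" for i
  proof -
    have "(\<Sum>j<n. G i j) = (\<Sum>j<n. (v j \<bullet> w i)^2)"
      proof (rule sum.cong)
      fix j show "G i j = (v j \<bullet> w i)^2" unfolding G_def w_def by (metis Tcomm inner_commute)
    qed simp
    also have "\<dots> = w i \<bullet> (S *v w i)" unfolding S_def by (rule scatter_quad[symmetric])
    also have "\<dots> = t i" unfolding w_def t_def STv by (simp add: inner_commute)
    finally show ?thesis .
  qed
  obtain d where d: "\<forall>j<n. 0 \<le> d j" "\<forall>i<n. (\<Sum>j<n. G i j * d j) = 1"
    using dd_solve[of n G t] half rs unfolding G_def t_def w_def by auto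
  define M where "M = (\<Sum>j<n. (\<chi> a b. d j * ((w j)$a * (w j)$b)) :: real^'k^'k)"
  have "transpose M = M"
    unfolding M_def by (simp add: Finite_Cartesian_Product.vec_eq_iff transpose_def mult.commute)
  moreover have "\<forall>x. 0 \<le> x \<bullet> (M *v x)"
    unfolding M_def osum_quad using d(1) by (auto intro!: sum_nonneg)
  moreover have "\<forall>i<n. v i \<bullet> (M *v v i) = 1"
  proof (intro allI impI)
    fix i assume i: "i<n"
    have "v i \<bullet> (M *v v i) = (\<Sum>j<n. G i j * d j)"
      unfolding M_def osum_quad G_def by (simp add: inner_commute mult.commute)
    then show "v i \<bullet> (M *v v i) = 1" using d(2) i by simp
  qed
  ultimately show ?thesis by blast
qed
end
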